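(* Let $a\in[0,\infty)$ and let $t:[0,1]\to[0,\infty]$ and $s:[0,\infty]\to[0,1]$ be continuous and increasing functions such that (1) $s(x)=0$ if and only if $x\in[0,a]$, and (2) the function $G_{t,s}:[0,1]^2\to[0,1]$, $G_{t,s}(x,y)=s(t(x)+t(y))$, is a grouping function. Then $t(x)=\frac{a}{2}$ if and only if $x=0$.
   Context: "Increasing" means non-decreasing. Arithmetic in $[0,\infty]$ uses $c+\infty=\infty$; continuity on $[0,\infty]$ refers to the usual topology of the extended half-line. A grouping function is a map $G:[0,1]^2\to[0,1]$ that is (G1) commutative, (G2) $G(x,y)=0$ iff $x=y=0$, (G3) $G(x,y)=1$ iff $x=1$ or $y=1$, (G4) increasing in each variable, (G5) continuous. *)

theory Defs
  imports "HOL-Analysis.Analysis" "HOL-Library.Extended_Nonnegative_Real"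
begin

definition grouping_function :: "(real \<Rightarrow> real \<Rightarrow> real) \<Rightarrow> bool" where
  "grouping_function G \<longleftrightarrow>
     (\<forall>x\<in>{0..1}. \<forall>y\<in>{0..1}. G x y \<in> {0..1}) \<and>
     (\<forall>x\<in>{0..1}. \<forall>y\<in>{0..1}. G x y = G y x) \<and>
     (\<forall>x\<in>{0..1}. \<forall>y\<in>{0..1}. G x y = 0 \<longleftrightarrow> x = 0 \<and> y = 0) \<and>
     (\<forall>x\<in>{0..1}. \<forall>y\<in>{0..1}. G x y = 1 \<longleftrightarrow> x = 1 \<or> y = 1) \<and>
     (\<forall>x\<in>{0..1}. \<forall>x'\<in>{0..1}. \<forall>y\<in>{0..1}. x \<le> x' \<longrightarrow> G x y \<le> G x' y) \<and>
     (\<forall>x\<in>{0..1}. \<forall>y\<in>{0..1}. \<forall>y'\<in>{0..1}. y \<le> y' \<longrightarrow> G x y \<le> G x y') \<and>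
     continuous_on ({0..1} \<times> {0..1}) (\<lambda>(x, y). G x y)"

end

theory Submission
  imports Defs
begin

theorem proposition6p1:
  fixes a :: real and t :: "real \<Rightarrow> ennreal" and s :: "ennreal \<Rightarrow> real"
  assumes a_nonneg: "0 \<le> a"
    and t_cont: "continuous_on {0..1} t"
    and t_mono: "mono_on {0..1} t"
    and s_range: "\<forall>u. s u \<in> {0..1}"
    and s_cont: "continuous_on UNIV s"
    and s_mono: "mono s"
    and s_zero: "\<forall>u. s u = 0 \<longleftrightarrow> u \<le> ennreal a"
    and grp: "grouping_function (\<lambda>x y. s (t x + t y))"
  shows "\<forall>x\<in>{0..1}. t x = ennreal (a / 2) \<longleftrightarrow> x = 0"
proof -
  have z: "\<forall>x\<in>{0..1}. \<forall>y\<in>{0..1}. s (t x + t y) = 0 \<longleftrightarrow> x = 0 \<and> y = 0"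
    using grp unfolding grouping_function_def apply (elim conjE) by assumption
  have le: "t 0 + t 0 \<le> ennreal a"
  proof -
    have "s (t 0 + t 0) = 0" using z by simp
    then show ?thesis using s_zero by blast
  qed
  have gt: "t x + t 0 > ennreal a" if "x \<in> {0<..1}" for x
  proof -
    have "x \<in> {0..1}" "x \<noteq> 0" using that by auto
    then have "s (t x + t 0) \<noteq> 0" using z by simp
    then have "\<not> (t x + t 0 \<le> ennreal a)" using s_zero by blast
    then show ?thesis by (simp add: not_le)
  qed
  have lim: "((\<lambda>x. t x + t 0) \<longlongrightarrow> t 0 + t 0) (at 0 within {0<..1})"
  proof -
    have "(t \<longlongrightarrow> t 0) (at 0 within {0..1})"
      using t_cont by (simp add: continuous_on_def)
    then have "(t \<longlongrightarrow> t 0) (at 0 within {0<..1})"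
      by (rule tendsto_within_subset) auto
    then show ?thesis by (intro tendsto_add) auto
  qed
  have ne: "at (0::real) within {0<..1} \<noteq> bot"
    by (simp add: at_within_eq_bot_iff)
  have ev: "eventually (\<lambda>x. ennreal a \<le> t x + t 0) (at 0 within {0<..1})"
    unfolding eventually_at_filter
    by (rule always_eventually) (auto intro!: less_imp_le gt)
  have ge: "ennreal a \<le> t 0 + t 0"
    by (rule tendsto_lowerbound[OF lim ev ne])
  have eq: "t 0 + t 0 = ennreal a" using le ge by simp
  have half: "ennreal (a/2) + ennreal (a/2) = ennreal a"
    using a_nonneg by (simp flip: ennreal_plus)
  have t0: "t 0 = ennreal (a/2)"
  proof -
    have "t 0 \<noteq> top" using eq by (metis ennreal_add_eq_top ennreal_neq_top)
    then obtain r where r: "t 0 = ennreal r" "r \<ge> 0" by (cases "t 0") auto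
    then have "ennreal (r + r) = ennreal a" using eq by (simp flip: ennreal_plus)
    then have "r + r = a" using r a_nonneg by (simp add: ennreal_inj)
    then have "r = a / 2" by simp
    then show ?thesis using r by simp
  qed
  show ?thesis
  proof (intro ballI iffI)
    fix x :: real assume x: "x \<in> {0..1}" "t x = ennreal (a/2)"
    show "x = 0"
    proof (rule ccontr)
      assume "x \<noteq> 0"
      then have "x \<in> {0<..1}" using x by auto
      then have "t x + t 0 > ennreal a" by (rule gt)
      then show False using x t0 half by simp
    qed
  next
    fix x :: real assume "x = 0" then show "t x = ennreal (a/2)" using t0 by simp
  qed
qed

end
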